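(* Let $\{X^{(n)}(t),t\ge0\}$, $n\in\mathbb N$, be a family of Markov processes on $V_n$ with generators $L_n$, and let $\{\eta(t),t\ge0\}$ be a Markov configuration process on $\Omega$ with generator $\mathcal L$ satisfying $L_n U_\phi=U_\phi\mathcal L$ on functions $\Omega_n\to\mathbb R$ for every $n$. Then the following are equivalent: (a) for every $n\in\mathbb N$ and every permutation-invariant $g:V_{n-1}\to\mathbb R$, $L_n\Pi^{(n)}g=\Pi^{(n)}L_{n-1}g$; (b) $[\mathcal L,\mathcal A]=0$.
   Context: $V$ is a countable set, $\Lambda\subseteq\mathbb N_0$ the single-site state space. For $\mathbf x\in V^n$, $\phi(\mathbf x):=\sum_{i=1}^n\delta_{x_i}$. $\Omega_n:=\{\eta\in\Lambda^V:\sum_x\eta_x=n\}$, $\Omega=\bigcup_n\Omega_n$, $V_n:=\{\mathbf x\in V^n:\phi(\mathbf x)\in\Omega_n\}$, $U_\phi f:=f\circ\phi$. A function $g$ of $n$ variables is permutation-invariant if $g(x_1,\dots,x_n)=g(x_{\sigma(1)},\dots,x_{\sigma(n)})$ for all permutations $\sigma$. For $g$ a function of $n-1$ variables, $(\Pi^{(n)}g)(x_1,\dots,x_n):=\sum_{i=1}^n g(x_1,\dots,x_{i-1},x_{i+1},\dots,x_n)$. The annihilation operator acts on $f:\Omega\to\mathbb R$ by $\mathcal Af(\eta)=\sum_{x\in V}a_xf(\eta)$, where $a_xf(\eta)=\eta_xf(\eta-\delta_x)$ if $\eta_x\ge1$ and $0$ if $\eta_x=0$. $[\cdot,\cdot]$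 denotes the commutator. *)

theory Defs
  imports Complex_Main "HOL-Combinatorics.Permutations" "HOL-Library.Countable"
begin

text \<open>Configurations are functions 'v => nat; functions on lists of sites model functions on V^n.\<close>

definition phi :: "'v list \<Rightarrow> ('v \<Rightarrow> nat)" where
  "phi xs = (\<lambda>y. count_list xs y)"

definition Omega :: "nat set \<Rightarrow> ('v \<Rightarrow> nat) set" where
  "Omega Lam = {\<eta>. finite {x. \<eta> x \<noteq> 0} \<and> (\<forall>x. \<eta> x \<in> Lam)}"

definition Omega_n :: "nat set \<Rightarrow> nat \<Rightarrow> ('v \<Rightarrow> nat) set" where
  "Omega_n Lam n = {\<eta> \<in> Omega Lam. (\<Sum>x\<in>{x. \<eta> x \<noteq> 0}. \<eta> x) = n}"

definition V_n :: "nat set \<Rightarrow> nat \<Rightarrow> 'v list set" where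
  "V_n Lam n = {xs. length xs = n \<and> phi xs \<in> Omega_n Lam n}"

definition U_phi :: "(('v \<Rightarrow> nat) \<Rightarrow> real) \<Rightarrow> ('v list \<Rightarrow> real)" where
  "U_phi f = f \<circ> phi"

definition del_nth :: "nat \<Rightarrow> 'a list \<Rightarrow> 'a list" where
  "del_nth i xs = take i xs @ drop (Suc i) xs"

definition Pi_op :: "nat \<Rightarrow> ('v list \<Rightarrow> real) \<Rightarrow> ('v list \<Rightarrow> real)" where
  "Pi_op n g = (\<lambda>xs. \<Sum>i<n. g (del_nth i xs))"

definition perm_invariant_on :: "'v list set \<Rightarrow> ('v list \<Rightarrow> real) \<Rightarrow> bool" where
  "perm_invariant_on S g \<longleftrightarrow>
     (\<forall>xs\<in>S. \<forall>\<sigma>. \<sigma> permutes {..<length xs} \<longrightarrow>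
        g (map (\<lambda>i. xs ! \<sigma> i) [0..<length xs]) = g xs)"

definition annih :: "(('v \<Rightarrow> nat) \<Rightarrow> real) \<Rightarrow> (('v \<Rightarrow> nat) \<Rightarrow> real)" where
  "annih f = (\<lambda>\<eta>. \<Sum>x\<in>{x. \<eta> x \<noteq> 0}. real (\<eta> x) * f (\<eta>(x := \<eta> x - 1)))"

text \<open>A Markov generator on a countable state space S, viewed abstractly: an operator
  on real functions on S (its value on S depends only on the argument restricted to S),
  linear, and annihilating constants.\<close>
definition markov_generator_on :: "'s set \<Rightarrow> (('s \<Rightarrow> real) \<Rightarrow> ('s \<Rightarrow> real)) \<Rightarrow> bool" where
  "markov_generator_on S L \<longleftrightarrow>
     (\<forall>f g. (\<forall>y\<in>S. f y = g y) \<longrightarrow> (\<forall>x\<in>S. L f x = L g x)) \<and>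
     (\<forall>f g a b. \<forall>x\<in>S. L (\<lambda>y. a * f y + b * g y) x = a * L f x + b * L g x) \<and>
     (\<forall>x\<in>S. L (\<lambda>_. 1) x = 0)"

end

theory Submission
  imports Defs
begin

lemma phi_mset: "phi xs = count (mset xs)"
  by (simp add: phi_def fun_eq_iff count_mset)

lemma supp_phi: "{x. phi xs x \<noteq> 0} = set xs"
  by (auto simp: phi_def count_list_0_iff)

lemma V_n_char: "xs \<in> V_n Lam n \<longleftrightarrow> length xs = n \<and> (\<forall>x. count_list xs x \<in> Lam)"
proof -
  have "(\<Sum>x\<in>{x. phi xs x \<noteq> 0}. phi xs x) = length xs"
    unfolding supp_phi by (simp add: phi_def sum_count_set)
  then show ?thesis
    unfolding V_n_def Omega_n_def Omega_def using supp_phi[of xs]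
    by (auto simp: phi_def)
qed

lemma Omega_surj:
  assumes "\<eta> \<in> Omega_n Lam n"
  shows "\<exists>xs\<in>V_n Lam n. phi xs = \<eta>"
proof -
  have fin: "finite {x. \<eta> x \<noteq> 0}" and lam: "\<forall>x. \<eta> x \<in> Lam"
    and s: "(\<Sum>x\<in>{x. \<eta> x \<noteq> 0}. \<eta> x) = n"
    using assms by (auto simp: Omega_n_def Omega_def)
  have "finite {x. 0 < \<eta> x}" using fin by simp
  then have c: "count (Abs_multiset \<eta>) = \<eta>" by (simp add: count_Abs_multiset)
  obtain xs where xs: "mset xs = Abs_multiset \<eta>" using ex_mset by blast
  have p: "phi xs = \<eta>" using c xs by (simp add: phi_mset)
  have "length xs = n" using s supp_phi[of xs] p
    by (metis phi_def sum_count_set finite_set order_refl)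
  then show ?thesis using p lam by (auto simp: V_n_char phi_def)
qed

lemma mset_del: "i < length xs \<Longrightarrow> mset (del_nth i xs) + {#xs!i#} = mset xs"
proof -
  assume i: "i < length xs"
  have "xs = take i xs @ xs!i # drop (Suc i) xs" using i by (simp add: id_take_nth_drop)
  then have "mset xs = mset (take i xs) + mset (xs!i # drop (Suc i) xs)"
    by (metis mset_append)
  then show ?thesis by (simp add: del_nth_def)
qed

lemma phi_del: "i < length xs \<Longrightarrow> phi (del_nth i xs) = (phi xs)(xs!i := phi xs (xs!i) - 1)"
proof -
  assume i: "i < length xs"
  have "mset (del_nth i xs) = mset xs - {#xs!i#}" using mset_del[OF i]
    by (metis add_diff_cancel_right')
  then show ?thesis by (auto simp: phi_mset fun_eq_iff)
qed

lemma length_del: "i < length xs \<Longrightarrow> length (del_nth i xs) = length xs - 1"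
  by (simp add: del_nth_def)

lemma del_V:
  assumes down: "\<forall>k\<in>Lam. \<forall>j\<le>k. j \<in> Lam" and xs: "xs \<in> V_n Lam n" and i: "i < n"
  shows "del_nth i xs \<in> V_n Lam (n - 1)"
proof -
  have l: "length xs = n" and c: "\<forall>x. count_list xs x \<in> Lam" using xs by (auto simp: V_n_char)
  have "\<forall>x. count_list (del_nth i xs) x \<in> Lam"
  proof
    fix x
    have "count_list (del_nth i xs) x \<le> count_list xs x"
      using phi_del[of i xs] i l by (simp add: phi_def fun_eq_iff)
    then show "count_list (del_nth i xs) x \<in> Lam" using down c by blast
  qed
  then show ?thesis using l i by (simp add: V_n_char length_del)
qed

lemma sum_list_map_count_real:
  "sum_list (map (H::'a \<Rightarrow> real) xs) = (\<Sum>x\<in>set xs. real (count_list xs x) * H x)"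
proof -
  have "sum_list (map H xs) = sum_list (map H xs)" ..
  show ?thesis
  proof (induction xs)
    case (Cons a xs)
    have "(\<Sum>x\<in>set (a#xs). real (count_list (a#xs) x) * H x)
        = (\<Sum>x\<in>insert a (set xs). real (count_list xs x) * H x) + H a"
    proof -
      have e: "\<And>x. real (count_list (a#xs) x) * H x = real (count_list xs x) * H x + (if a = x then H x else 0)"
        by (simp add: algebra_simps)
      show ?thesis by (simp only: e sum.distrib set_simps) (simp add: sum.delta)
    qed
    also have "\<dots> = (\<Sum>x\<in>set xs. real (count_list xs x) * H x) + H a"
      by (cases "a \<in> set xs") (auto simp: insert_absorb count_list_0_iff)
    finally show ?case using Cons by simp
  qed simp
qed

lemma Pi_annih:
  assumes "length xs = n"
  shows "Pi_op n (U_phi f) xs = annih f (phi xs)"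
proof -
  define H where "H x = f ((phi xs)(x := phi xs x - 1))" for x
  have "Pi_op n (U_phi f) xs = (\<Sum>i<length xs. H (xs!i))"
    using assms by (simp add: Pi_op_def U_phi_def H_def phi_del)
  also have "\<dots> = sum_list (map H xs)"
    by (simp add: sum_list_sum_nth atLeast0LessThan)
  also have "\<dots> = (\<Sum>x\<in>set xs. real (count_list xs x) * H x)"
    by (rule sum_list_map_count_real)
  also have "\<dots> = annih f (phi xs)"
    unfolding annih_def supp_phi H_def by (simp add: phi_def)
  finally show ?thesis .
qed

lemma gen_local:
  "markov_generator_on S L \<Longrightarrow> (\<And>y. y \<in> S \<Longrightarrow> f y = g y) \<Longrightarrow> x \<in> S \<Longrightarrow> L f x = L g x"
  unfolding markov_generator_on_def by blast

lemma gen_zero: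
  assumes "markov_generator_on S L" "x \<in> S"
  shows "L (\<lambda>_. 0) x = 0"
proof -
  have "\<forall>f g a b. \<forall>x\<in>S. L (\<lambda>y. a * f y + b * g y) x = a * L f x + b * L g x"
    using assms unfolding markov_generator_on_def by blast
  from this[rule_format, where f="\<lambda>_. 1" and g="\<lambda>_. 1" and a=0 and b=0, OF assms(2)]
  show ?thesis by simp
qed

lemma phi_in_Omega: "xs \<in> V_n Lam n \<Longrightarrow> phi xs \<in> Omega Lam"
  by (simp add: V_n_def Omega_n_def)

lemma Omega_in_n: "\<eta> \<in> Omega Lam \<Longrightarrow> \<eta> \<in> Omega_n Lam (\<Sum>x\<in>{x. \<eta> x \<noteq> 0}. \<eta> x)"
  by (simp add: Omega_n_def)

theorem theorem2p7:
  fixes Lam :: "nat set"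
    and Ln :: "nat \<Rightarrow> ('v::countable list \<Rightarrow> real) \<Rightarrow> ('v list \<Rightarrow> real)"
    and L :: "(('v \<Rightarrow> nat) \<Rightarrow> real) \<Rightarrow> (('v \<Rightarrow> nat) \<Rightarrow> real)"
  assumes Lam_down: "\<forall>k\<in>Lam. \<forall>j\<le>k. j \<in> Lam"
    and gen_n: "\<forall>n. markov_generator_on (V_n Lam n) (Ln n)"
    and gen: "markov_generator_on (Omega Lam) L"
    and intertw: "\<forall>n f. \<forall>xs\<in>V_n Lam n. Ln n (U_phi f) xs = U_phi (L f) xs"
  shows "(\<forall>n\<ge>1. \<forall>g. perm_invariant_on (V_n Lam (n - 1)) g \<longrightarrow>
            (\<forall>xs\<in>V_n Lam n. Ln n (Pi_op n g) xs = Pi_op n (Ln (n - 1) g) xs))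
         \<longleftrightarrow> (\<forall>f. \<forall>\<eta>\<in>Omega Lam. L (annih f) \<eta> = annih (L f) \<eta>)"
proof
  assume A: "\<forall>n\<ge>1. \<forall>g. perm_invariant_on (V_n Lam (n - 1)) g \<longrightarrow>
            (\<forall>xs\<in>V_n Lam n. Ln n (Pi_op n g) xs = Pi_op n (Ln (n - 1) g) xs)"
  show "\<forall>f. \<forall>\<eta>\<in>Omega Lam. L (annih f) \<eta> = annih (L f) \<eta>"
  proof (intro allI ballI)
    fix f and \<eta> :: "'v \<Rightarrow> nat"
    assume "\<eta> \<in> Omega Lam"
    then obtain n xs where xs: "xs \<in> V_n Lam n" and p: "phi xs = \<eta>"
      using Omega_in_n Omega_surj by blast
    have len: "length xs = n" using xs by (simp add: V_n_char)
    have "L (annih f) \<eta> = Ln n (U_phi (annih f)) xs"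
      using intertw xs p by (simp add: U_phi_def)
    also have "\<dots> = Ln n (Pi_op n (U_phi f)) xs"
      by (rule gen_local[OF gen_n[rule_format] _ xs]) (metis Pi_annih V_n_char U_phi_def comp_apply)
    also have "\<dots> = Pi_op n (Ln (n - 1) (U_phi f)) xs"
    proof (cases "n = 0")
      case True
      have "Ln n (Pi_op n (U_phi f)) xs = Ln n (\<lambda>_. 0) xs"
        using True by (simp add: Pi_op_def)
      also have "\<dots> = 0" using gen_zero[OF gen_n[rule_format] xs] .
      finally show ?thesis using True by (simp add: Pi_op_def)
    next
      case False
      have "perm_invariant_on (V_n Lam (n - 1)) (U_phi f)"
        unfolding perm_invariant_on_def
      proof (intro ballI allI impI)
        fix ys :: "'v list" and \<sigma>
        assume "\<sigma> permutes {..<length ys}"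
        then have "mset (permute_list \<sigma> ys) = mset ys" by simp
        then show "U_phi f (map (\<lambda>i. ys ! \<sigma> i) [0..<length ys]) = U_phi f ys"
          by (simp add: U_phi_def phi_mset permute_list_def)
      qed
      then show ?thesis using A False xs by simp
    qed
    also have "\<dots> = Pi_op n (U_phi (L f)) xs"
      unfolding Pi_op_def
      by (rule sum.cong[OF refl]) (use intertw del_V[OF Lam_down xs] in auto)
    also have "\<dots> = annih (L f) \<eta>" using Pi_annih len p by blast
    finally show "L (annih f) \<eta> = annih (L f) \<eta>" .
  qed
next
  assume B: "\<forall>f. \<forall>\<eta>\<in>Omega Lam. L (annih f) \<eta> = annih (L f) \<eta>"
  show "\<forall>n\<ge>1. \<forall>g. perm_invariant_on (V_n Lam (n - 1)) g \<longrightarrow>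
            (\<forall>xs\<in>V_n Lam n. Ln n (Pi_op n g) xs = Pi_op n (Ln (n - 1) g) xs)"
  proof (intro allI impI ballI)
    fix n and g :: "'v list \<Rightarrow> real" and xs :: "'v list"
    assume n: "1 \<le> n" and pi: "perm_invariant_on (V_n Lam (n - 1)) g" and xs: "xs \<in> V_n Lam n"
    have len: "length xs = n" using xs by (simp add: V_n_char)
    define f where "f \<eta> = g (SOME ys. ys \<in> V_n Lam (n - 1) \<and> phi ys = \<eta>)" for \<eta>
    have gf: "g ys = U_phi f ys" if ys: "ys \<in> V_n Lam (n - 1)" for ys
    proof -
      define zs where "zs = (SOME zs. zs \<in> V_n Lam (n - 1) \<and> phi zs = phi ys)"
      have "zs \<in> V_n Lam (n - 1) \<and> phi zs = phi ys"
        unfolding zs_def by (rule someI[of _ ys]) (use ys in simp)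
      then have "mset zs = mset ys" by (metis phi_mset multiset_eqI)
      then obtain p where p: "p permutes {..<length ys}" "permute_list p ys = zs"
        by (rule mset_eq_permutation)
      have "g (permute_list p ys) = g ys"
        using pi ys p(1) unfolding perm_invariant_on_def permute_list_def by blast
      then show ?thesis using p(2) by (simp add: U_phi_def f_def zs_def)
    qed
    have "Ln n (Pi_op n g) xs = Ln n (Pi_op n (U_phi f)) xs"
      by (rule gen_local[OF gen_n[rule_format] _ xs])
         (auto simp: Pi_op_def V_n_char intro!: sum.cong gf del_V[OF Lam_down])
    also have "\<dots> = Ln n (U_phi (annih f)) xs"
      by (rule gen_local[OF gen_n[rule_format] _ xs]) (metis Pi_annih V_n_char U_phi_def comp_apply)
    also have "\<dots> = L (annih f) (phi xs)"
      using intertw xs by (simp add: U_phi_def)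
    also have "\<dots> = annih (L f) (phi xs)"
      using B phi_in_Omega[OF xs] by blast
    also have "\<dots> = Pi_op n (U_phi (L f)) xs" using Pi_annih len by metis
    also have "\<dots> = Pi_op n (Ln (n - 1) (U_phi f)) xs"
      unfolding Pi_op_def
      by (rule sum.cong[OF refl]) (use intertw del_V[OF Lam_down xs] in auto)
    also have "\<dots> = Pi_op n (Ln (n - 1) g) xs"
      unfolding Pi_op_def
    proof (rule sum.cong[OF refl])
      fix i assume "i \<in> {..<n}"
      then have d: "del_nth i xs \<in> V_n Lam (n - 1)" using del_V[OF Lam_down xs] by simp
      show "Ln (n - 1) (U_phi f) (del_nth i xs) = Ln (n - 1) g (del_nth i xs)"
        by (rule gen_local[OF gen_n[rule_format] _ d]) (simp add: gf)
    qed
    finally show "Ln n (Pi_op n g) xs = Pi_op n (Ln (n - 1) g) xs" .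
  qed
qed

end
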